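(* $\mathcal{OBLOT}^{F}_{\mathcal{L.V.}} > \mathcal{OBLOT}^{S}_{\mathcal{L.V.}}$, i.e. under limited visibility the model $\mathcal{OBLOT}$ under the fully synchronous scheduler is computationally more powerful than under the semi-synchronous scheduler.
   Context: Robots are anonymous, identical, autonomous computational entities viewed as points moving in the Euclidean plane. Each has its own local coordinate system, with no agreement between robots and no common chirality, and perceives itself at its origin. Robots operate in Look-Compute-Move cycles. In Look a robot takes an instantaneous snapshot of the positions of the robots it can see. In Compute it runs the common algorithm on the snapshot to obtain a destination. In Move it moves there. Model $\mathcal{OBLOT}$: robots are oblivious (no memory of previous cycles) and silent (no means of communication). Schedulers: time is divided into rounds. Under the semi-synchronous scheduler $S$ (SSYNCH), in each round an adversarially chosen set of robots is activated and they perform one full cycle in perfect synchronization; every robot is activated infinitely often. Under the fully synchronous scheduler $F$ (FSYNCH), every robot is activated in every round. Limited visibility $\mathcal{L.V.}$: a robot sees only robots within a fixed distance $V_r$ (same for all robots) of its current position, and the initial visibility graph (robots adjacent iff they see each other) is connected. Relations: $\mathcal{M}^X_V$ denotes model $\mathcal{M}$ under scheduler $X$ with visibility $V$. $Task(\mathcal{M},X,V;R)$ is the set of problems solvable by team $R$ in that setting, and $\mathcal{R}$ is the set of all teams. $\mathcal{M}^{X_1}_{V_1} > \mathcal{N}^{X_2}_{V_2}$ means that for all $R\in\mathcal{R}$, $Task(\mathcal{M},X_1,V_1;R)\supseteq Task(\mathcal{N},X_2,V_2;R)$, and for some $R$ the difference $Task(\mathcal{M},X_1,V_1;R)\setminus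 Task(\mathcal{N},X_2,V_2;R)$ is nonempty. *)

theory Defs
  imports Complex_Main
begin

text \<open>Robots move in the Euclidean plane, modelled as the complex numbers.
  Robots of a team of size n are indexed by 0..<n.  A configuration gives the
  position of every robot.\<close>

type_synonym point = complex
type_synonym config = "nat \<Rightarrow> point"
type_synonym execution = "nat \<Rightarrow> config"

text \<open>A local coordinate system (up to the translation putting the robot at its
  own origin) is an arbitrary similarity: a nonzero complex factor (rotation and
  scaling) and a flag telling whether the handedness (chirality) is reversed.\<close>

type_synonym frame = "complex \<times> bool"

definition to_local :: "frame \<Rightarrow> point \<Rightarrow> point" where
  "to_local fr w = (if snd fr then fst fr * cnj w else fst fr * w)"

definition from_local :: "frame \<Rightarrow> point \<Rightarrow> point" where
  "from_local fr d = (if snd fr then cnj (d / fst fr) else d / fst fr)"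

record team =
  nrob :: nat
  vis :: real
  frames :: "nat \<Rightarrow> frame"
  init :: config

definition sees :: "team \<Rightarrow> config \<Rightarrow> nat \<Rightarrow> nat \<Rightarrow> bool" where
  "sees R C i j \<longleftrightarrow> i < nrob R \<and> j < nrob R \<and> dist (C i) (C j) \<le> vis R"

definition valid_team :: "team \<Rightarrow> bool" where
  "valid_team R \<longleftrightarrow> nrob R \<ge> 1 \<and> vis R > 0 \<and>
     (\<forall>i < nrob R. fst (frames R i) \<noteq> 0) \<and>
     (\<forall>i < nrob R. \<forall>j < nrob R. (sees R (init R))\<^sup>*\<^sup>* i j)"

text \<open>Oblivious, silent, anonymous, identical robots: the common algorithm maps
  the snapshot (the set of visible robot positions, in the robot's local
  coordinates, the robot itself being at the origin) to a destination in local
  coordinates.\<close>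

type_synonym algorithm = "point set \<Rightarrow> point"

definition snapshot :: "team \<Rightarrow> config \<Rightarrow> nat \<Rightarrow> point set" where
  "snapshot R C i = {to_local (frames R i) (C j - C i) | j. sees R C i j}"

definition destination :: "team \<Rightarrow> algorithm \<Rightarrow> config \<Rightarrow> nat \<Rightarrow> point" where
  "destination R A C i = C i + from_local (frames R i) (A (snapshot R C i))"

text \<open>Execution under a sequence of activation sets (one per round); activated
  robots perform a full Look-Compute-Move cycle synchronously within the round
  and reach their destination (rigid moves).\<close>

fun exec :: "team \<Rightarrow> algorithm \<Rightarrow> (nat \<Rightarrow> nat set) \<Rightarrow> execution" where
  "exec R A act 0 = init R"
| "exec R A act (Suc t) =
     (\<lambda>i. if i \<in> act t \<and> i < nrob R then destination R A (exec R A act t) i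
          else exec R A act t i)"

type_synonym scheduler = "team \<Rightarrow> (nat \<Rightarrow> nat set) \<Rightarrow> bool"

definition FSYNC :: scheduler where
  "FSYNC R act \<longleftrightarrow> (\<forall>t. act t = {..<nrob R})"

definition SSYNC :: scheduler where
  "SSYNC R act \<longleftrightarrow> (\<forall>t. act t \<subseteq> {..<nrob R} \<and> act t \<noteq> {}) \<and>
     (\<forall>i < nrob R. \<forall>t. \<exists>t' \<ge> t. i \<in> act t')"

text \<open>Problems are temporal geometric predicates on executions; they depend on the
  sequence of configurations but not on the timing (invariance under stuttering).\<close>

definition stutter_equiv :: "execution \<Rightarrow> execution \<Rightarrow> bool" where
  "stutter_equiv e e' \<longleftrightarrow> (\<exists>(c :: execution) (f :: nat \<Rightarrow> nat) g. mono f \<and> surj f \<and> mono g \<and> surj g \<and>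
       e = c \<circ> f \<and> e' = c \<circ> g)"

definition problem :: "(execution \<Rightarrow> bool) \<Rightarrow> bool" where
  "problem P \<longleftrightarrow> (\<forall>x y. stutter_equiv x y \<longrightarrow> (P x \<longleftrightarrow> P y))"

definition solves :: "team \<Rightarrow> scheduler \<Rightarrow> algorithm \<Rightarrow> (execution \<Rightarrow> bool) \<Rightarrow> bool" where
  "solves R X A P \<longleftrightarrow> (\<forall>act. X R act \<longrightarrow> P (exec R A act))"

definition Task :: "scheduler \<Rightarrow> team \<Rightarrow> (execution \<Rightarrow> bool) set" where
  "Task X R = {P. problem P \<and> (\<exists>A. solves R X A P)}"

definition more_powerful :: "scheduler \<Rightarrow> scheduler \<Rightarrow> bool" where
  "more_powerful X1 X2 \<longleftrightarrow>
     (\<forall>R. valid_team R \<longrightarrow> Task X2 R \<subseteq> Task X1 R) \<and>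
     (\<exists>R. valid_team R \<and> Task X1 R - Task X2 R \<noteq> {})"

end

theory Submission
  imports Defs
begin

lemma fsync_ssync: "valid_team R \<Longrightarrow> FSYNC R act \<Longrightarrow> SSYNC R act"
proof -
  assume v: "valid_team R" and f: "FSYNC R act"
  have "nrob R \<ge> 1" using v by (simp add: valid_team_def)
  then have "0 \<in> {..<nrob R}" by simp
  then show ?thesis using f unfolding FSYNC_def SSYNC_def by (metis empty_iff lessThan_iff order_refl)
qed

lemma part1: "valid_team R \<Longrightarrow> Task SSYNC R \<subseteq> Task FSYNC R"
  unfolding Task_def solves_def using fsync_ssync by blast

definition T0 :: team where
  "T0 = \<lparr>nrob = 2, vis = 1,
         frames = (\<lambda>i. if i = 0 then (1, False) else (-1, False)),
         init = (\<lambda>i. if i = 0 then 0 else 1)\<rparr>"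

definition P0 :: "execution \<Rightarrow> bool" where
  "P0 e \<longleftrightarrow> (\<forall>t. e t 0 + e t 1 = 1) \<and> (\<exists>t. e t 0 \<noteq> 0)"

lemma P0_range: "P0 e \<longleftrightarrow> (\<forall>C\<in>range e. C 0 + C 1 = 1) \<and> (\<exists>C\<in>range e. C 0 \<noteq> 0)"
  unfolding P0_def by auto

lemma range_comp_surj: "surj f \<Longrightarrow> range (c \<circ> f) = range c"
  by (metis image_comp)

lemma P0_problem: "problem P0"
  unfolding problem_def stutter_equiv_def
proof (intro allI impI)
  fix x y :: execution
  assume "\<exists>(c :: execution) (f :: nat \<Rightarrow> nat) g. mono f \<and> surj f \<and> mono g \<and> surj g \<and>
       x = c \<circ> f \<and> y = c \<circ> g"
  then obtain c :: execution and f g :: "nat \<Rightarrow> nat" where "surj f" "surj g" "x = c \<circ> f" "y = c \<circ> g" by metis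
  then have "range x = range y" using range_comp_surj by metis
  then show "P0 x = P0 y" unfolding P0_range by simp
qed

lemma T0_valid: "valid_team T0"
proof -
  have s01: "sees T0 (init T0) 0 1" "sees T0 (init T0) 1 0"
    by (auto simp: sees_def T0_def dist_norm)
  have s00: "sees T0 (init T0) i i" if "i < 2" for i
    using that by (auto simp: sees_def T0_def)
  show ?thesis unfolding valid_team_def
  proof (intro conjI allI impI)
    fix i j assume "i < nrob T0" "j < nrob T0"
    then have "i < 2" "j < 2" by (auto simp: T0_def)
    then show "(sees T0 (init T0))\<^sup>*\<^sup>* i j"
      using s01 by (cases "i = j") (auto simp: less_2_cases_iff)
  qed (auto simp: T0_def)
qed

definition A0 :: algorithm where "A0 S = 1"

lemma fsync_exec:
  assumes "FSYNC T0 act"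
  shows "exec T0 A0 act t 0 = of_nat t \<and> exec T0 A0 act t 1 = 1 - of_nat t"
proof (induction t)
  case 0 then show ?case by (simp add: T0_def)
next
  case (Suc t)
  have "act t = {..<2}" using assms by (simp add: FSYNC_def T0_def)
  with Suc show ?case
    by (simp add: destination_def from_local_def A0_def T0_def)
qed

lemma fsync_solves: "solves T0 FSYNC A0 P0"
  unfolding solves_def P0_def
proof (rule allI, rule impI, rule conjI)
  fix act assume a: "FSYNC T0 act"
  show "\<forall>t. exec T0 A0 act t 0 + exec T0 A0 act t 1 = 1"
    using fsync_exec[OF a] by simp
  show "\<exists>t. exec T0 A0 act t 0 \<noteq> 0"
    using fsync_exec[OF a, of 1] by (intro exI[of _ 1]) simp
qed

definition act0 :: "nat \<Rightarrow> nat set" where "act0 t = {t mod 2}"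

lemma act0_ssync: "SSYNC T0 act0"
  unfolding SSYNC_def act0_def T0_def
proof (intro conjI allI impI)
  fix i t :: nat assume "i < nrob \<lparr>nrob = 2, vis = 1,
         frames = (\<lambda>i. if i = 0 then (1, False) else (-1, False)),
         init = (\<lambda>i. if i = 0 then 0 else 1)\<rparr>"
  then have "i < 2" by simp
  then show "\<exists>t'\<ge>t. i \<in> {t' mod 2}"
    by (intro exI[of _ "2*t+i"]) auto
qed auto

lemma not_ssync: "\<not> P0 (exec T0 A act0)"
proof
  assume p: "P0 (exec T0 A act0)"
  let ?e = "exec T0 A act0"
  have sum: "?e t 0 + ?e t 1 = 1" for t using p unfolding P0_def by blast
  have "?e t 0 = 0" for t
  proof (induction t)
    case 0 then show ?case by (simp add: T0_def)
  next
    case (Suc t)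
    show ?case
    proof (cases "t mod 2 = 0")
      case True
      then have "?e (Suc t) 1 = ?e t 1" by (simp add: act0_def)
      then show ?thesis using sum[of t] sum[of "Suc t"] Suc by simp
    next
      case False
      then show ?thesis using Suc by (simp add: act0_def)
    qed
  qed
  then show False using p unfolding P0_def by blast
qed

theorem theorem14:
  shows "more_powerful FSYNC SSYNC"
  unfolding more_powerful_def
proof (intro conjI allI impI)
  fix R :: team assume "valid_team R" then show "Task SSYNC R \<subseteq> Task FSYNC R" by (rule part1)
next
  have "P0 \<in> Task FSYNC T0" unfolding Task_def using P0_problem fsync_solves by blast
  moreover have "P0 \<notin> Task SSYNC T0"
    unfolding Task_def solves_def using act0_ssync not_ssync by blast
  ultimately show "\<exists>R. valid_team R \<and> Task FSYNC R - Task SSYNC R \<noteq> {}"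
    using T0_valid by blast
qed

end
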